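(* Let $(M,d)$ be a complete pointed metric space with at least three distinct points and let $g:\widetilde{M}\to\mathbb{R}$. Then $g$ is bounded and satisfies $d(x,y)g(x,y)\le d(x,u)g(x,u)+d(u,y)g(u,y)$ for all distinct $x,u,y\in M$ if and only if there exists a non-empty bounded set $A\subset\mathrm{Lip}_0(M)$ such that $g(x,y)=\sup_{f\in A}\frac{f(x)-f(y)}{d(x,y)}$ for all $(x,y)\in\widetilde{M}$. Moreover, in this case the continuous extension of $g$ to $\beta\widetilde{M}$ belongs to $G$, and $A$ can be chosen so that the supremum is always attained.
   Context: $\mathrm{Lip}_0(M)$ is the Banach space of Lipschitz $f:M\to\mathbb{R}$ with $f(0)=0$ ($0$ the base point), normed by the Lipschitz constant. $\widetilde{M}=\{(x,y)\in M\times M:x\ne y\}$, $\beta\widetilde{M}$ its Stone–Čech compactification. $G$ is the set of $g\in C(\beta\widetilde{M})$ with $d(x,y)g(x,y)\le d(x,u)g(x,u)+d(u,y)g(u,y)$ for all distinct $x,u,y\in M$. *)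

theory Defs
  imports "HOL-Analysis.Analysis"
begin

definition Mtilde :: "('a \<times> 'a) set" where
  "Mtilde = {(x, y). x \<noteq> y}"

definition Lip0 :: "'a::metric_space \<Rightarrow> ('a \<Rightarrow> real) set" where
  "Lip0 x0 = {f. (\<exists>C. C-lipschitz_on UNIV f) \<and> f x0 = 0}"

definition lip_norm :: "('a::metric_space \<Rightarrow> real) \<Rightarrow> real" where
  "lip_norm f = (SUP p\<in>Mtilde. \<bar>f (fst p) - f (snd p)\<bar> / dist (fst p) (snd p))"

definition G_ineq :: "('a::metric_space \<times> 'a \<Rightarrow> real) \<Rightarrow> bool" where
  "G_ineq g \<longleftrightarrow> (\<forall>x u y. x \<noteq> u \<and> u \<noteq> y \<and> x \<noteq> y \<longrightarrow>
      dist x y * g (x, y) \<le> dist x u * g (x, u) + dist u y * g (u, y))"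

definition sup_repr :: "('a::metric_space \<Rightarrow> real) set \<Rightarrow> ('a \<times> 'a \<Rightarrow> real) \<Rightarrow> bool" where
  "sup_repr A g \<longleftrightarrow> (\<forall>x y. x \<noteq> y \<longrightarrow>
      g (x, y) = (SUP f\<in>A. (f x - f y) / dist x y))"

end

theory Submission
  imports Defs
begin

definition rh :: "('a::metric_space \<times> 'a \<Rightarrow> real) \<Rightarrow> 'a \<Rightarrow> 'a \<Rightarrow> real" where
  "rh g x y = dist x y * g (x, y)"

lemma Gi:
  assumes "G_ineq g" "x \<noteq> u" "u \<noteq> y" "x \<noteq> y"
  shows "rh g x y \<le> rh g x u + rh g u y"
  using assms unfolding G_ineq_def rh_def by blast

lemma symnn:
  fixes g :: "'a::metric_space \<times> 'a \<Rightarrow> real"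
  assumes three: "\<exists>a b c::'a. a \<noteq> b \<and> b \<noteq> c \<and> a \<noteq> c" and G: "G_ineq g"
  shows "0 \<le> rh g x u + rh g u x"
proof (cases "x = u")
  case True then show ?thesis by (simp add: rh_def)
next
  case False
  obtain w where w: "w \<noteq> x" "w \<noteq> u"
  proof -
    obtain a b c :: 'a where abc: "a \<noteq> b" "b \<noteq> c" "a \<noteq> c" using three by blast
    show ?thesis
    proof (cases "a \<noteq> x \<and> a \<noteq> u")
      case True then show ?thesis using that by blast
    next
      case F1: False
      show ?thesis
      proof (cases "b \<noteq> x \<and> b \<noteq> u")
        case True then show ?thesis using that by blast
      next
        case False then show ?thesis using that F1 abc by metis
      qed
    qed
  qed
  have "rh g x w \<le> rh g x u + rh g u w" using Gi[OF G] False w by metis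
  moreover have "rh g w x \<le> rh g w u + rh g u x" using Gi[OF G] False w by metis
  moreover have "rh g u w \<le> rh g u x + rh g x w" using Gi[OF G] False w by metis
  moreover have "rh g w u \<le> rh g w x + rh g x u" using Gi[OF G] False w by metis
  ultimately show ?thesis by linarith
qed

lemma tri_full:
  fixes g :: "'a::metric_space \<times> 'a \<Rightarrow> real"
  assumes three: "\<exists>a b c::'a. a \<noteq> b \<and> b \<noteq> c \<and> a \<noteq> c" and G: "G_ineq g"
  shows "rh g x y \<le> rh g x u + rh g u y"
proof -
  consider "x = y" | "x = u" | "u = y" | "x \<noteq> u \<and> u \<noteq> y \<and> x \<noteq> y" by blast
  then show ?thesis
  proof cases
    case 1 then show ?thesis using symnn[OF three G, of x u] by (simp add: rh_def)
  next
    case 2 then show ?thesis by (simp add: rh_def)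
  next
    case 3 then show ?thesis by (simp add: rh_def)
  next
    case 4 then show ?thesis using Gi[OF G] by blast
  qed
qed

lemma rh_bound:
  assumes B: "\<forall>p\<in>Mtilde. \<bar>g p\<bar> \<le> B"
  shows "\<bar>rh g x y\<bar> \<le> B * dist x y"
proof (cases "x = y")
  case True then show ?thesis by (simp add: rh_def)
next
  case False
  then have "\<bar>g (x,y)\<bar> \<le> B" using B by (auto simp: Mtilde_def)
  then have "\<bar>g (x,y)\<bar> * dist x y \<le> B * dist x y" by (rule mult_right_mono) simp
  then show ?thesis by (simp add: rh_def abs_mult mult.commute)
qed

lemma bwd:
  fixes x0 :: "'a::metric_space" and g :: "'a \<times> 'a \<Rightarrow> real"
  assumes ne: "A \<noteq> {}" and sub: "A \<subseteq> Lip0 x0" and bd: "bdd_above (lip_norm ` A)"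
    and rep: "sup_repr A g"
  shows "bounded (g ` Mtilde) \<and> G_ineq g"
proof -
  obtain L where L: "\<And>f. f \<in> A \<Longrightarrow> lip_norm f \<le> L" using bd by (auto simp: bdd_above_def)
  have sl: "\<bar>f x - f y\<bar> / dist x y \<le> L" if f: "f \<in> A" and xy: "x \<noteq> y" for f x y
  proof -
    obtain C where C: "C-lipschitz_on UNIV f" using f sub by (auto simp: Lip0_def)
    have "bdd_above ((\<lambda>p. \<bar>f (fst p) - f (snd p)\<bar> / dist (fst p) (snd p)) ` Mtilde)"
    proof (rule bdd_aboveI2)
      fix p :: "'a \<times> 'a" assume "p \<in> Mtilde"
      then have "dist (fst p) (snd p) > 0" by (auto simp: Mtilde_def)
      moreover have "\<bar>f (fst p) - f (snd p)\<bar> \<le> C * dist (fst p) (snd p)"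
        using lipschitz_onD[OF C] by (metis UNIV_I dist_real_def)
      ultimately show "\<bar>f (fst p) - f (snd p)\<bar> / dist (fst p) (snd p) \<le> C"
        by (simp add: divide_le_eq)
    qed
    then have "\<bar>f x - f y\<bar> / dist x y \<le> lip_norm f"
      unfolding lip_norm_def using xy
      by (intro cSUP_upper2[where x="(x,y)"]) (auto simp: Mtilde_def)
    then show ?thesis using L[OF f] by linarith
  qed
  have sl0: "\<bar>(f x - f y) / dist x y\<bar> \<le> L" if "f \<in> A" "x \<noteq> y" for f x y
    using sl[OF that] by (simp add: abs_divide)
  have sl2a: "(f x - f y) / dist x y \<le> L" if "f \<in> A" "x \<noteq> y" for f x y
    using sl0[OF that] abs_ge_self[of "(f x - f y) / dist x y"] by linarith
  have sl2b: "- L \<le> (f x - f y) / dist x y" if "f \<in> A" "x \<noteq> y" for f x y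
    using sl0[OF that] abs_ge_minus_self[of "(f x - f y) / dist x y"] by linarith
  note sl2 = sl2a sl2b
  have bdA: "bdd_above ((\<lambda>f. (f x - f y) / dist x y) ` A)" if "x \<noteq> y" for x y
    using sl2(1)[OF _ that] by (intro bdd_aboveI2[where M=L]) auto
  have gxy: "g (x,y) = (SUP f\<in>A. (f x - f y) / dist x y)" if "x \<noteq> y" for x y
    using rep that unfolding sup_repr_def by blast
  have gb: "\<bar>g (x,y)\<bar> \<le> L" if xy: "x \<noteq> y" for x y
  proof -
    have "g (x,y) \<le> L" unfolding gxy[OF xy] using ne sl2(1)[OF _ xy] by (intro cSUP_least) auto
    moreover obtain f where f: "f \<in> A" using ne by blast
    have "- L \<le> g (x,y)" unfolding gxy[OF xy]
      using sl2(2)[OF f xy] cSUP_upper[OF f bdA[OF xy]] by linarith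
    ultimately show ?thesis by linarith
  qed
  have "bounded (g ` Mtilde)"
    unfolding bounded_iff using gb by (auto simp: Mtilde_def)
  moreover have "G_ineq g"
    unfolding G_ineq_def
  proof (intro allI impI)
    fix x u y :: 'a assume d: "x \<noteq> u \<and> u \<noteq> y \<and> x \<noteq> y"
    let ?R = "dist x u * g (x, u) + dist u y * g (u, y)"
    have pos: "dist x y > 0" using d by simp
    have "g (x,y) \<le> ?R / dist x y" unfolding gxy[of x y, OF conjunct2[OF conjunct2[OF d]]]
    proof (rule cSUP_least[OF ne])
      fix f assume f: "f \<in> A"
      have "(f x - f u) / dist x u \<le> g (x,u)" unfolding gxy[of x u, OF conjunct1[OF d]]
        using cSUP_upper[OF f bdA] d by blast
      then have 1: "f x - f u \<le> dist x u * g (x,u)" using d by (simp add: divide_le_eq mult.commute)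
      have "(f u - f y) / dist u y \<le> g (u,y)" unfolding gxy[of u y, OF conjunct1[OF conjunct2[OF d]]]
        using cSUP_upper[OF f bdA] d by blast
      then have 2: "f u - f y \<le> dist u y * g (u,y)" using d by (simp add: divide_le_eq mult.commute)
      show "(f x - f y) / dist x y \<le> ?R / dist x y"
        using 1 2 pos by (intro divide_right_mono) auto
    qed
    then show "dist x y * g (x, y) \<le> ?R" using pos by (simp add: le_divide_eq mult.commute)
  qed
  ultimately show ?thesis by blast
qed


lemma fwd:
  fixes x0 :: "'a::metric_space" and g :: "'a \<times> 'a \<Rightarrow> real"
  assumes three: "\<exists>a b c::'a. a \<noteq> b \<and> b \<noteq> c \<and> a \<noteq> c"
    and bnd: "bounded (g ` Mtilde)" and G: "G_ineq g"
  shows "continuous_on Mtilde g \<and>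
           (\<exists>A. A \<noteq> {} \<and> A \<subseteq> Lip0 x0 \<and> bdd_above (lip_norm ` A) \<and> sup_repr A g \<and>
                (\<forall>x y. x \<noteq> y \<longrightarrow> (\<exists>f\<in>A. g (x, y) = (f x - f y) / dist x y)))"
proof -
  obtain B where Bpos: "B > 0" and B0: "\<forall>p\<in>Mtilde. \<bar>g p\<bar> \<le> B"
    using bnd unfolding bounded_pos by auto
  note rb = rh_bound[OF B0]
  note tri = tri_full[OF three G]
  define F where "F q = (\<lambda>z. rh g z q - rh g x0 q)" for q
  define A where "A = range F"
  have key: "F q x - F q y \<le> rh g x y" for q x y
    using tri[of x q y] unfolding F_def by simp
  have lipF: "\<bar>F q x - F q y\<bar> \<le> B * dist x y" for q x y
  proof -
    have "F q x - F q y \<le> B * dist x y" using key[of q x y] rb[of x y] by linarith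
    moreover have "F q y - F q x \<le> B * dist x y" using key[of q y x] rb[of y x]
      by (simp add: dist_commute)
    ultimately show ?thesis by linarith
  qed
  have Fq: "F q y - F q y = 0" for q y by simp
  have Fy: "F y x - F y y = rh g x y" for x y unfolding F_def by (simp add: rh_def)
  have mt: "(Mtilde :: ('a \<times> 'a) set) \<noteq> {}"
  proof -
    from three obtain a b c :: 'a where "a \<noteq> b" by (elim exE conjE)
    then have "(a,b) \<in> Mtilde" by (simp add: Mtilde_def)
    then show ?thesis by (metis empty_iff)
  qed
  have AL: "A \<subseteq> Lip0 x0"
  proof
    fix f assume "f \<in> A"
    then obtain q where f: "f = F q" by (auto simp: A_def)
    have "B-lipschitz_on UNIV f"
      by (rule lipschitz_onI) (use lipF Bpos in \<open>auto simp: f dist_real_def\<close>)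
    moreover have "f x0 = 0" by (simp add: f F_def)
    ultimately show "f \<in> Lip0 x0" unfolding Lip0_def by blast
  qed
  have bdd: "bdd_above (lip_norm ` A)"
  proof (rule bdd_aboveI2[where M=B])
    fix f assume "f \<in> A"
    then obtain q where f: "f = F q" by (auto simp: A_def)
    show "lip_norm f \<le> B" unfolding lip_norm_def
    proof (rule cSUP_least[OF mt])
      fix p :: "'a \<times> 'a" assume "p \<in> Mtilde"
      then have "dist (fst p) (snd p) > 0" by (auto simp: Mtilde_def)
      then show "\<bar>f (fst p) - f (snd p)\<bar> / dist (fst p) (snd p) \<le> B"
        using lipF by (simp add: divide_le_eq f)
    qed
  qed
  have gval: "g (x,y) = (F y x - F y y) / dist x y" if "x \<noteq> y" for x y
    using that by (simp add: Fy rh_def)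
  have rep: "sup_repr A g" unfolding sup_repr_def
  proof (intro allI impI)
    fix x y :: 'a assume xy: "x \<noteq> y"
    then have pos: "dist x y > 0" by simp
    have le: "(F q x - F q y) / dist x y \<le> g (x,y)" for q
      using key[of q x y] pos by (simp add: divide_le_eq rh_def mult.commute)
    have "(SUP f\<in>A. (f x - f y) / dist x y) = (SUP q. (F q x - F q y) / dist x y)"
      unfolding A_def by (simp add: image_image)
    also have "\<dots> = g (x,y)"
    proof (rule antisym)
      show "(SUP q. (F q x - F q y) / dist x y) \<le> g (x, y)" by (rule cSUP_least) (use le in auto)
      show "g (x, y) \<le> (SUP q. (F q x - F q y) / dist x y)"
        unfolding gval[OF xy] by (rule cSUP_upper) (use le in \<open>auto intro!: bdd_aboveI2[where M="g (x,y)"]\<close>)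
    qed
    finally show "g (x, y) = (SUP f\<in>A. (f x - f y) / dist x y)" by simp
  qed
  have att: "\<forall>x y. x \<noteq> y \<longrightarrow> (\<exists>f\<in>A. g (x, y) = (f x - f y) / dist x y)"
    using gval unfolding A_def by (metis rangeI)
  define r where "r p = dist (fst p) (snd p) * g p" for p :: "'a \<times> 'a"
  have rr: "r p = rh g (fst p) (snd p)" for p by (simp add: r_def rh_def)
  have rlip: "(2*B)-lipschitz_on UNIV r"
  proof (rule lipschitz_onI)
    fix p q :: "'a \<times> 'a"
    obtain x y where p: "p = (x,y)" by (cases p)
    obtain x' y' where q: "q = (x',y')" by (cases q)
    have d1: "dist x x' \<le> dist p q" using dist_fst_le[of p q] by (simp add: p q)
    have d2: "dist y y' \<le> dist p q" using dist_snd_le[of p q] by (simp add: p q)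
    have a: "rh g x y \<le> rh g x x' + rh g x' y' + rh g y' y"
      using tri[of x y x'] tri[of x' y y'] by linarith
    have b: "rh g x' y' \<le> rh g x' x + rh g x y + rh g y y'"
      using tri[of x' y' x] tri[of x y' y] by linarith
    have e1: "B * dist x x' \<le> B * dist p q" using d1 Bpos by (intro mult_left_mono) auto
    have e2: "B * dist y y' \<le> B * dist p q" using d2 Bpos by (intro mult_left_mono) auto
    have "rh g x x' \<le> B * dist p q" using rb[of x x'] e1 by linarith
    moreover have "rh g y' y \<le> B * dist p q" using rb[of y' y] e2 dist_commute[of y' y] by (metis abs_le_D1 order_trans)
    moreover have "rh g x' x \<le> B * dist p q" using rb[of x' x] e1 dist_commute[of x' x] by (metis abs_le_D1 order_trans)
    moreover have "rh g y y' \<le> B * dist p q" using rb[of y y'] e2 by linarith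
    ultimately show "dist (r p) (r q) \<le> 2 * B * dist p q"
      using a b unfolding rr p q dist_real_def by simp
  qed (use Bpos in simp)
  have rc: "continuous_on Mtilde r"
    using lipschitz_on_continuous_on[OF rlip] continuous_on_subset by blast
  have dc: "continuous_on Mtilde (\<lambda>p::'a \<times> 'a. dist (fst p) (snd p))"
    by (intro continuous_intros)
  have H1: "continuous_on Mtilde (\<lambda>p. r p / dist (fst p) (snd p))"
    by (rule continuous_on_divide[OF rc dc]) (auto simp: Mtilde_def)
  have H2: "\<And>p. p \<in> Mtilde \<Longrightarrow> r p / dist (fst p) (snd p) = g p"
    by (auto simp: Mtilde_def r_def)
  have "continuous_on Mtilde (\<lambda>p. r p / dist (fst p) (snd p)) = continuous_on Mtilde g"
    by (rule continuous_on_cong[OF refl]) (rule H2)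
  with H1 have cg: "continuous_on Mtilde g" by (rule iffD1[rotated])
  have ne: "A \<noteq> {}" by (simp add: A_def)
  have ex: "\<exists>A. A \<noteq> {} \<and> A \<subseteq> Lip0 x0 \<and> bdd_above (lip_norm ` A) \<and> sup_repr A g \<and>
                (\<forall>x y. x \<noteq> y \<longrightarrow> (\<exists>f\<in>A. g (x, y) = (f x - f y) / dist x y))"
    by (rule exI[of _ A]) (intro conjI ne AL bdd rep att)
  show ?thesis by (intro conjI cg ex)
qed

theorem proposition2p7:
  fixes x0 :: "'a::{metric_space, complete_space}"
    and g :: "'a \<times> 'a \<Rightarrow> real"
  assumes three: "\<exists>a b c::'a. a \<noteq> b \<and> b \<noteq> c \<and> a \<noteq> c"
  shows "((bounded (g ` Mtilde) \<and> G_ineq g) \<longleftrightarrow>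
           (\<exists>A. A \<noteq> {} \<and> A \<subseteq> Lip0 x0 \<and> bdd_above (lip_norm ` A) \<and> sup_repr A g))
       \<and> ((bounded (g ` Mtilde) \<and> G_ineq g) \<longrightarrow>
           continuous_on Mtilde g \<and>
           (\<exists>A. A \<noteq> {} \<and> A \<subseteq> Lip0 x0 \<and> bdd_above (lip_norm ` A) \<and> sup_repr A g \<and>
                (\<forall>x y. x \<noteq> y \<longrightarrow> (\<exists>f\<in>A. g (x, y) = (f x - f y) / dist x y))))"
proof -
  have F: "continuous_on Mtilde g \<and>
           (\<exists>A. A \<noteq> {} \<and> A \<subseteq> Lip0 x0 \<and> bdd_above (lip_norm ` A) \<and> sup_repr A g \<and>
                (\<forall>x y. x \<noteq> y \<longrightarrow> (\<exists>f\<in>A. g (x, y) = (f x - f y) / dist x y)))"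
    if h: "bounded (g ` Mtilde) \<and> G_ineq g"
    by (rule fwd[OF three conjunct1[OF h] conjunct2[OF h]])
  have I: "(bounded (g ` Mtilde) \<and> G_ineq g) \<longleftrightarrow>
           (\<exists>A. A \<noteq> {} \<and> A \<subseteq> Lip0 x0 \<and> bdd_above (lip_norm ` A) \<and> sup_repr A g)"
  proof
    assume h: "bounded (g ` Mtilde) \<and> G_ineq g"
    from F[OF h] show "\<exists>A. A \<noteq> {} \<and> A \<subseteq> Lip0 x0 \<and> bdd_above (lip_norm ` A) \<and> sup_repr A g"
      by (elim conjE exE) (intro exI conjI; assumption)
  next
    assume "\<exists>A. A \<noteq> {} \<and> A \<subseteq> Lip0 x0 \<and> bdd_above (lip_norm ` A) \<and> sup_repr A g"
    then obtain A where "A \<noteq> {}" "A \<subseteq> Lip0 x0" "bdd_above (lip_norm ` A)" "sup_repr A g"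
      by (elim conjE exE)
    from bwd[OF this] show "bounded (g ` Mtilde) \<and> G_ineq g" .
  qed
  show ?thesis by (rule conjI[OF I impI[OF F]])
qed

end
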